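(* Consider the four-node network with the setting described in the context. Under serial network and channel decoding at node 4, the achievable rate region $\Lambda_{\text{serial}}$ is the convex hull of all rate pairs $(R_A,R_B)$ satisfying $$R_A \le \mathbb{C}_{1,4}, \qquad R_B \le \mathbb{C}',$$ where $\mathbb{C}_{1,4}=1-H(p_{1,4})$ and $\mathbb{C}'=1-H(p')$ is the capacity of a binary symmetric channel with crossover probability $$p' = [(1-p_{1,3})(1-p_{2,3})+p_{1,3}p_{2,3}]\,p_{3,4} + [p_{1,3}(1-p_{2,3})+(1-p_{1,3})p_{2,3}](1-p_{3,4}).$$
   Context: Network: nodes $1,2,3,4$ with directed links $1\to3$, $1\to4$, $2\to3$, $3\to4$. Each link $i\to j$ is a binary symmetric channel (BSC) with crossover probability $p_{i,j}$: input $X_{i,j}\in\{0,1\}$, output $Y_{i,j}=X_{i,j}\oplus E_{i,j}$ with $\Pr\{E_{i,j}=1\}=p_{i,j}$; the link channels are independent, time invariant and memoryless. $H(p)=-p\log p-(1-p)\log(1-p)$ is the binary entropy function (base 2), and the capacity of a BSC with crossover $p$ is $1-H(p)$. Messages $A$ and $B$ are independent and uniformly distributed on $\{1,\dots,\lfloor 2^{nR_A}\rfloor\}$ and $\{1,\dots,\lfloor 2^{nR_B}\rfloor\}$, with $n$ the common block length (each link is used $n$ times). Node 1 encodes $A$ with a (linear) channel code into $\mathbf{X}_{1,3}(A)=\mathbf{X}_{1,4}(A)\in\{0,1\}^n$ and sends it on both links $1\to3$ and $1\to4$; node 2 encodes $B$ with a (linear) channel code into $\mathbf{X}_{2,3}(B)\in\{0,1\}^n$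 and sends it on link $2\to3$. Node 3 performs no decoding: it transmits $\mathbf{X}_{3,4}=\mathbf{Y}_{1,3}\oplus\mathbf{Y}_{2,3}$ (bitwise XOR). Node 4 must estimate $(\hat A,\hat B)$ from $\mathbf{Y}_{1,4}$ and $\mathbf{Y}_{3,4}$; a rate pair is achievable if $\Pr\{(\hat A,\hat B)\neq(A,B)\}$ can be made arbitrarily small. Serial decoding: node 4 first decodes $A$ from $\mathbf{Y}_{1,4}$, then reconstructs $\mathbf{X}_{1,3}(\hat A)$, forms $\mathbf{Y}_{3,4}\oplus\mathbf{X}_{1,3}(\hat A)$ and decodes $B$ from it. The achievable rate region of a strategy is the set of rate pairs achievable when node 4 uses that strategy. *)

theory Defs
  imports "HOL-Analysis.Analysis"
begin

text \<open>Binary entropy (base 2), with the convention 0 log 0 = 0 (automatic, since 0 * _ = 0).\<close>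
definition bin_entropy :: "real \<Rightarrow> real" where
  "bin_entropy p = - (p * log 2 p) - (1 - p) * log 2 (1 - p)"

definition bsc_capacity :: "real \<Rightarrow> real" where
  "bsc_capacity p = 1 - bin_entropy p"

text \<open>Binary words of length n, i.e. {0,1}^n (True = 1).\<close>
definition bitvecs :: "nat \<Rightarrow> bool list set" where
  "bitvecs n = {xs. length xs = n}"

definition xorv :: "bool list \<Rightarrow> bool list \<Rightarrow> bool list" where
  "xorv xs ys = map2 (\<noteq>) xs ys"

definition bsc_noise_prob :: "real \<Rightarrow> bool list \<Rightarrow> real" where
  "bsc_noise_prob p e = prod_list (map (\<lambda>b. if b then p else 1 - p) e)"

definition num_msgs :: "nat \<Rightarrow> real \<Rightarrow> nat" where
  "num_msgs n R = nat \<lfloor>2 powr (real n * R)\<rfloor>"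

definition serial_decode ::
  "(nat \<Rightarrow> bool list) \<Rightarrow> (bool list \<Rightarrow> nat) \<Rightarrow> (bool list \<Rightarrow> nat)
    \<Rightarrow> bool list \<Rightarrow> bool list \<Rightarrow> nat \<times> nat" where
  "serial_decode f decA decB y14 y34 =
     (let ahat = decA y14 in (ahat, decB (xorv y34 (f ahat))))"

text \<open>Error probability Pr{(A-hat,B-hat) \<noteq> (A,B)} for uniform independent messages A in {1..MA},
  B in {1..MB}, encoders f (node 1, on links 1-3 and 1-4) and g (node 2), node 3 forwarding
  Y13 xor Y23, independent BSC noises on the four links, and serial decoding at node 4.\<close>
definition serial_error_prob ::
  "real \<Rightarrow> real \<Rightarrow> real \<Rightarrow> real \<Rightarrow> nat \<Rightarrow> nat \<Rightarrow> nat \<Rightarrow>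
   (nat \<Rightarrow> bool list) \<Rightarrow> (nat \<Rightarrow> bool list) \<Rightarrow> (bool list \<Rightarrow> nat) \<Rightarrow> (bool list \<Rightarrow> nat) \<Rightarrow> real"
  where
  "serial_error_prob p13 p14 p23 p34 n MA MB f g decA decB =
     (1 / (real MA * real MB)) *
     (\<Sum>a\<in>{1..MA}. \<Sum>b\<in>{1..MB}.
        \<Sum>e13\<in>bitvecs n. \<Sum>e14\<in>bitvecs n. \<Sum>e23\<in>bitvecs n. \<Sum>e34\<in>bitvecs n.
          bsc_noise_prob p13 e13 * bsc_noise_prob p14 e14 *
          bsc_noise_prob p23 e23 * bsc_noise_prob p34 e34 *
          (let y13 = xorv (f a) e13; y14 = xorv (f a) e14; y23 = xorv (g b) e23;
               x34 = xorv y13 y23; y34 = xorv x34 e34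
           in if serial_decode f decA decB y14 y34 \<noteq> (a, b) then 1 else 0))"

definition serial_achievable :: "real \<Rightarrow> real \<Rightarrow> real \<Rightarrow> real \<Rightarrow> real \<times> real \<Rightarrow> bool" where
  "serial_achievable p13 p14 p23 p34 R \<longleftrightarrow>
     0 \<le> fst R \<and> 0 \<le> snd R \<and>
     (\<forall>\<epsilon>>0. \<exists>N. \<forall>n\<ge>N. \<exists>f g decA decB.
        (\<forall>a\<in>{1..num_msgs n (fst R)}. f a \<in> bitvecs n) \<and>
        (\<forall>b\<in>{1..num_msgs n (snd R)}. g b \<in> bitvecs n) \<and>
        serial_error_prob p13 p14 p23 p34 n (num_msgs n (fst R)) (num_msgs n (snd R))
          f g decA decB \<le> \<epsilon>)"

text \<open>Achievable rate region (closure of the set of achievable rate pairs, standard convention).\<close>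
definition serial_region :: "real \<Rightarrow> real \<Rightarrow> real \<Rightarrow> real \<Rightarrow> (real \<times> real) set" where
  "serial_region p13 p14 p23 p34 = closure {R. serial_achievable p13 p14 p23 p34 R}"

end

theory Submission
  imports Defs
begin

abbreviation W where "W \<equiv> bsc_noise_prob"
definition cnt :: "bool list \<Rightarrow> nat" where "cnt e = length (filter id e)"

lemma finite_bitvecs[simp]: "finite (bitvecs n)"
proof -
  have "bitvecs n = {xs. set xs \<subseteq> (UNIV::bool set) \<and> length xs = n}" by (auto simp: bitvecs_def)
  thus ?thesis using finite_lists_length_eq[of "UNIV::bool set" n] by simp
qed

lemma card_bitvecs: "card (bitvecs n) = 2^n"
proof -
  have "bitvecs n = {xs. set xs \<subseteq> (UNIV::bool set) \<and> length xs = n}" by (auto simp: bitvecs_def)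
  thus ?thesis using card_lists_length_eq[of "UNIV::bool set" n] by simp
qed

lemma bitvecs_0: "bitvecs 0 = {[]}" by (auto simp: bitvecs_def)

lemma bitvecs_Suc: "bitvecs (Suc n) = Cons True ` bitvecs n \<union> Cons False ` bitvecs n"
proof (rule set_eqI)
  fix xs show "xs \<in> bitvecs (Suc n) \<longleftrightarrow> xs \<in> Cons True ` bitvecs n \<union> Cons False ` bitvecs n"
    by (cases xs) (auto simp: bitvecs_def)
qed

lemma sum_bitvecs_Suc:
  "(\<Sum>e\<in>bitvecs (Suc n). F e) = (\<Sum>e\<in>bitvecs n. F (True # e)) + (\<Sum>e\<in>bitvecs n. F (False # e))"
proof -
  have "(\<Sum>e\<in>bitvecs (Suc n). F e) = (\<Sum>e\<in>Cons True ` bitvecs n. F e) + (\<Sum>e\<in>Cons False ` bitvecs n. F e)"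
    unfolding bitvecs_Suc by (rule sum.union_disjoint) auto
  also have "\<dots> = (\<Sum>e\<in>bitvecs n. F (True # e)) + (\<Sum>e\<in>bitvecs n. F (False # e))"
    by (simp add: sum.reindex)
  finally show ?thesis .
qed

lemma W_Nil[simp]: "W p [] = 1" by (simp add: bsc_noise_prob_def)
lemma W_Cons[simp]: "W p (b # e) = (if b then p else 1 - p) * W p e" by (simp add: bsc_noise_prob_def)

lemma W_nonneg: "0 \<le> p \<Longrightarrow> p \<le> 1 \<Longrightarrow> 0 \<le> W p e"
  by (induction e) auto

lemma sum_W: "(\<Sum>e\<in>bitvecs n. W p e) = 1"
proof (induction n)
  case (Suc n)
  have "(\<Sum>e\<in>bitvecs (Suc n). W p e) = p * (\<Sum>e\<in>bitvecs n. W p e) + (1-p) * (\<Sum>e\<in>bitvecs n. W p e)"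
    by (simp add: sum_bitvecs_Suc sum_distrib_left)
  thus ?case using Suc by simp
qed (simp add: bitvecs_0)

lemma cnt_simps[simp]: "cnt [] = 0" "cnt (True # e) = Suc (cnt e)" "cnt (False # e) = cnt e"
  by (auto simp: cnt_def)

lemma cnt_le: "cnt e \<le> length e" by (simp add: cnt_def)

lemma W_cnt: "W p e = p ^ cnt e * (1 - p) ^ (length e - cnt e)"
proof (induction e)
  case (Cons b e) thus ?case using cnt_le[of e] by (cases b) (auto simp: Suc_diff_le)
qed simp

lemma S1: "(\<Sum>e\<in>bitvecs n. W p e * real (cnt e)) = n * p"
proof (induction n)
  case (Suc n)
  have "(\<Sum>e\<in>bitvecs (Suc n). W p e * real (cnt e)) = p * (\<Sum>e\<in>bitvecs n. W p e * real (cnt e))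
     + p * (\<Sum>e\<in>bitvecs n. W p e) + (1-p) * (\<Sum>e\<in>bitvecs n. W p e * real (cnt e))"
    by (simp add: sum_bitvecs_Suc sum_distrib_left sum.distrib distrib_left distrib_right mult.assoc)
  thus ?case using Suc by (simp add: sum_W algebra_simps)
qed (simp add: bitvecs_0)

lemma S2: "(\<Sum>e\<in>bitvecs n. W p e * real (cnt e)^2) = n * p * (1 - p) + n^2 * p^2"
proof (induction n)
  case 0 thus ?case by (simp add: bitvecs_0)
next
  case (Suc n)
  have "(\<Sum>e\<in>bitvecs (Suc n). W p e * real (cnt e)^2)
     = p * (\<Sum>e\<in>bitvecs n. W p e * real (cnt e)^2) + 2 * p * (\<Sum>e\<in>bitvecs n. W p e * real (cnt e))
       + p * (\<Sum>e\<in>bitvecs n. W p e) + (1 - p) * (\<Sum>e\<in>bitvecs n. W p e * real (cnt e)^2)"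
    by (simp add: sum_bitvecs_Suc sum_distrib_left sum.distrib power2_eq_square distrib_left distrib_right mult.assoc mult.left_commute)
  also have "\<dots> = Suc n * p * (1 - p) + (Suc n)^2 * p^2"
    unfolding Suc.IH S1 sum_W by (simp add: power2_eq_square algebra_simps)
  finally show ?case by simp
qed

lemma var: "(\<Sum>e\<in>bitvecs n. W p e * (real (cnt e) - n * p)^2) = n * p * (1 - p)"
proof -
  have pt: "\<And>e. W p e * (real (cnt e) - n * p)^2 = (W p e * real (cnt e)^2 + (n*p)^2 * W p e) - (2*n*p) * (W p e * real (cnt e))"
    by (simp add: power2_eq_square algebra_simps)
  have "(\<Sum>e\<in>bitvecs n. W p e * (real (cnt e) - n * p)^2)
    = (\<Sum>e\<in>bitvecs n. W p e * real (cnt e)^2) + (n*p)^2 * (\<Sum>e\<in>bitvecs n. W p e)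
      - (2 * n * p) * (\<Sum>e\<in>bitvecs n. W p e * real (cnt e))"
    unfolding pt sum_subtractf sum.distrib sum_distrib_left by simp
  thus ?thesis unfolding S1 S2 sum_W by (simp add: power2_eq_square algebra_simps)
qed


lemma xorv_Nil[simp]: "xorv [] ys = []" "xorv xs [] = []" by (auto simp: xorv_def)
lemma xorv_Cons[simp]: "xorv (a # xs) (b # ys) = (a \<noteq> b) # xorv xs ys" by (simp add: xorv_def)
lemma length_xorv[simp]: "length (xorv xs ys) = min (length xs) (length ys)" by (simp add: xorv_def)
lemma nth_xorv: "i < length xs \<Longrightarrow> i < length ys \<Longrightarrow> xorv xs ys ! i = (xs ! i \<noteq> ys ! i)"
  by (simp add: xorv_def)

lemma xorv_bv: "x \<in> bitvecs n \<Longrightarrow> y \<in> bitvecs n \<Longrightarrow> xorv x y \<in> bitvecs n"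
  by (simp add: bitvecs_def)

lemma xorv_cancel: "length u = length e \<Longrightarrow> xorv u (xorv u e) = e"
  by (rule nth_equalityI) (auto simp: nth_xorv)
lemma xorv_cancel2: "length u = length e \<Longrightarrow> xorv (xorv u e) u = e"
  by (rule nth_equalityI) (auto simp: nth_xorv)
lemma xorv_comm: "xorv x y = xorv y x"
  by (rule nth_equalityI) (auto simp: nth_xorv)

lemma sum_xorv_shift:
  assumes "v \<in> bitvecs n"
  shows "(\<Sum>x\<in>bitvecs n. F (xorv v x)) = (\<Sum>y\<in>bitvecs n. F y)"
  by (rule sum.reindex_bij_witness[where i="xorv v" and j="xorv v"])
    (use assms in \<open>auto simp: bitvecs_def xorv_cancel\<close>)

definition conv :: "real \<Rightarrow> real \<Rightarrow> real" where "conv p q = p * (1 - q) + (1 - p) * q"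

lemma dsum_const:
  "(\<Sum>x\<in>A. \<Sum>y\<in>B. (c * f x) * (d * g y) * k x y) = (c::real) * d * (\<Sum>x\<in>A. \<Sum>y\<in>B. f x * g y * k x y)"
  unfolding sum_distrib_left by (simp add: mult_ac)

lemma conv_sum:
  "(\<Sum>e1\<in>bitvecs n. \<Sum>e2\<in>bitvecs n. W p e1 * W q e2 * h (xorv e1 e2)) = (\<Sum>e\<in>bitvecs n. W (conv p q) e * h e)"
proof (induction n arbitrary: h)
  case 0 thus ?case by (simp add: bitvecs_0)
next
  case (Suc n)
  let ?A = "\<lambda>h. (\<Sum>e1\<in>bitvecs n. \<Sum>e2\<in>bitvecs n. W p e1 * W q e2 * h (xorv e1 e2))"
  let ?B = "\<lambda>h. (\<Sum>e\<in>bitvecs n. W (conv p q) e * h e)"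
  define hT where "hT = (\<lambda>e. h (True # e))"
  define hF where "hF = (\<lambda>e. h (False # e))"
  have "(\<Sum>e1\<in>bitvecs (Suc n). \<Sum>e2\<in>bitvecs (Suc n). W p e1 * W q e2 * h (xorv e1 e2))
     = (\<Sum>e1\<in>bitvecs n. \<Sum>e2\<in>bitvecs n. (p * W p e1) * (q * W q e2) * hF (xorv e1 e2))
     + (\<Sum>e1\<in>bitvecs n. \<Sum>e2\<in>bitvecs n. (p * W p e1) * ((1-q) * W q e2) * hT (xorv e1 e2))
     + ((\<Sum>e1\<in>bitvecs n. \<Sum>e2\<in>bitvecs n. ((1-p) * W p e1) * (q * W q e2) * hT (xorv e1 e2))
     + (\<Sum>e1\<in>bitvecs n. \<Sum>e2\<in>bitvecs n. ((1-p) * W p e1) * ((1-q) * W q e2) * hF (xorv e1 e2)))"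
    by (simp add: sum_bitvecs_Suc sum.distrib hT_def hF_def)
  also have "\<dots> = (p*q + (1-p)*(1-q)) * ?A hF + (p*(1-q) + (1-p)*q) * ?A hT"
    unfolding dsum_const by (simp add: algebra_simps)
  also have "\<dots> = (1 - conv p q) * ?B hF + conv p q * ?B hT"
    unfolding Suc.IH by (simp add: conv_def algebra_simps)
  also have "\<dots> = (\<Sum>e\<in>bitvecs (Suc n). W (conv p q) e * h e)"
    by (simp add: sum_bitvecs_Suc sum_distrib_left hT_def hF_def mult_ac)
  finally show ?case .
qed


abbreviation H where "H \<equiv> bin_entropy"

definition atyp :: "real \<Rightarrow> nat \<Rightarrow> real \<Rightarrow> real" where
  "atyp p n \<delta> = (\<Sum>e\<in>bitvecs n. W p e *
     (if W p e < 2 powr (-(n*(H p+\<delta>))) \<or> 2 powr (-(n*(H p-\<delta>))) < W p e then 1 else 0))"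

lemma atyp_nonneg: "0 \<le> p \<Longrightarrow> p \<le> 1 \<Longrightarrow> 0 \<le> atyp p n \<delta>"
  unfolding atyp_def by (intro sum_nonneg) (auto simp: W_nonneg)

lemma atyp_bound:
  assumes p: "0 \<le> p" "p \<le> 1" and d: "\<delta> > 0"
  shows "\<exists>K. \<forall>n>0. atyp p n \<delta> \<le> K / n"
proof (cases "p = 0 \<or> p = 1")
  case True
  have H0: "H p = 0" using True by (auto simp: bin_entropy_def)
  have "atyp p n \<delta> = 0" for n
    unfolding atyp_def
  proof (intro sum.neutral ballI)
    fix e assume "e \<in> bitvecs n"
    have W01: "W p e = 0 \<or> W p e = 1" using True cnt_le[of e] unfolding W_cnt by (auto simp: power_0_left split: if_splits)
    have a: "2 powr (-(n*\<delta>)) \<le> 1" using powr_mono[of "-(n*\<delta>)" 0 "2::real"] d by simp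
    have b: "1 \<le> 2 powr (n*\<delta>)" using powr_mono[of 0 "n*\<delta>" "2::real"] d by simp
    show "W p e * (if W p e < 2 powr (-(n*(H p+\<delta>))) \<or> 2 powr (-(n*(H p-\<delta>))) < W p e then 1 else 0) = 0"
      using W01 a b H0 by auto
  qed
  thus ?thesis by (intro exI[of _ 0]) auto
next
  case False
  hence p0: "0 < p" "p < 1" using p by auto
  define L where "L = log 2 p - log 2 (1 - p)"
  show ?thesis
  proof (intro exI[of _ "L^2 * p * (1 - p) / \<delta>^2"] allI impI)
    fix n :: nat assume n: "n > 0"
    have pt: "W p e * (if W p e < 2 powr (-(n*(H p+\<delta>))) \<or> 2 powr (-(n*(H p-\<delta>))) < W p e then 1 else 0)
      \<le> (L^2 / (n*\<delta>)^2) * (W p e * (real (cnt e) - n * p)^2)" if e: "e \<in> bitvecs n" for e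
    proof (cases "W p e < 2 powr (-(n*(H p+\<delta>))) \<or> 2 powr (-(n*(H p-\<delta>))) < W p e")
      case True
      have le: "cnt e \<le> n" using cnt_le[of e] e by (simp add: bitvecs_def)
      have Wpos: "0 < W p e" unfolding W_cnt using p0 by simp
      have lw: "log 2 (W p e) = cnt e * log 2 p + (n - cnt e) * log 2 (1 - p)"
        unfolding W_cnt using p0 e by (simp add: log_mult log_nat_power bitvecs_def)
      have key: "log 2 (W p e) + n * H p = (real (cnt e) - n * p) * L"
        unfolding lw L_def bin_entropy_def using le by (simp add: of_nat_diff algebra_simps)
      have "log 2 (W p e) < -(n*(H p+\<delta>)) \<or> -(n*(H p-\<delta>)) < log 2 (W p e)"
      proof -
        have eq: "W p e = 2 powr (log 2 (W p e))" using Wpos by simp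
        show ?thesis using True by (subst (asm) (1 2) eq) auto
      qed
      hence "n*\<delta> < \<bar>(real (cnt e) - n * p) * L\<bar>" using key by (auto simp: algebra_simps)
      hence "(n*\<delta>)^2 < \<bar>(real (cnt e) - n * p) * L\<bar>^2"
        using n d by (intro power_strict_mono) auto
      hence "(n*\<delta>)^2 < ((real (cnt e) - n * p) * L)^2" by simp
      hence "1 \<le> ((real (cnt e) - n * p) * L)^2 / (n*\<delta>)^2" using n d by simp
      hence "W p e * 1 \<le> W p e * (((real (cnt e) - n * p) * L)^2 / (n*\<delta>)^2)"
        using Wpos by (intro mult_left_mono) auto
      thus ?thesis using True by (simp add: power_mult_distrib mult_ac)
    next
      case False thus ?thesis using W_nonneg[OF p] by simp
    qed
    have "atyp p n \<delta> \<le> (\<Sum>e\<in>bitvecs n. (L^2 / (n*\<delta>)^2) * (W p e * (real (cnt e) - n * p)^2))"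
      unfolding atyp_def by (intro sum_mono pt)
    also have "\<dots> = (L^2 / (n*\<delta>)^2) * (n * p * (1 - p))" unfolding sum_distrib_left[symmetric] var ..
    also have "\<dots> = L^2 * p * (1 - p) / \<delta>^2 / n" using n d by (simp add: power2_eq_square field_simps)
    finally show "atyp p n \<delta> \<le> L^2 * p * (1 - p) / \<delta>^2 / n" .
  qed
qed


definition err :: "real \<Rightarrow> nat \<Rightarrow> nat \<Rightarrow> (nat \<Rightarrow> bool list) \<Rightarrow> (bool list \<Rightarrow> nat) \<Rightarrow> real" where
  "err p n M f d = (1 / real M) *
     (\<Sum>a\<in>{1..M}. \<Sum>e\<in>bitvecs n. W p e * (if d (xorv (f a) e) \<noteq> a then 1 else 0))"

lemma count_typ:
  assumes "t > 0" "0 \<le> p" "p \<le> 1"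
  shows "(\<Sum>y\<in>bitvecs n. (if t \<le> W p y then 1 else 0::real)) \<le> 1 / t"
proof -
  have "t * (\<Sum>y\<in>bitvecs n. (if t \<le> W p y then 1 else 0::real)) = (\<Sum>y\<in>bitvecs n. (if t \<le> W p y then t else 0))"
    unfolding sum_distrib_left by (intro sum.cong) auto
  also have "\<dots> \<le> (\<Sum>y\<in>bitvecs n. W p y)" using assms by (intro sum_mono) (auto simp: W_nonneg)
  finally show ?thesis using assms by (simp add: sum_W field_simps)
qed

lemma exists_below_avg:
  fixes g :: "'a \<Rightarrow> real" and B :: real
  assumes "finite S" "S \<noteq> {}" "(\<Sum>x\<in>S. g x) \<le> card S * B"
  shows "\<exists>x\<in>S. g x \<le> B"
proof (rule ccontr)
  assume "\<not> ?thesis"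
  hence "\<forall>x\<in>S. B < g x" by auto
  hence "(\<Sum>x\<in>S. B) < (\<Sum>x\<in>S. g x)" using assms by (intro sum_strict_mono) auto
  thus False using assms by simp
qed


lemma converse_shot:
  assumes p: "0 \<le> p" "p \<le> 1" and M: "M > 0" and f: "\<forall>a\<in>{1..M}. f a \<in> bitvecs n"
  shows "1 - err p n M f d \<le> 2 powr (-(n*(H p-\<delta>))) * 2^n / M + atyp p n \<delta>"
proof -
  define t where "t = 2 powr (-(n*(H p-\<delta>)))"
  have t: "t > 0" by (simp add: t_def)
  define ind where "ind a e = (if d (xorv (f a) e) = a then 1 else 0::real)" for a e
  define A where "A e = (if W p e < 2 powr (-(n*(H p+\<delta>))) \<or> 2 powr (-(n*(H p-\<delta>))) < W p e then 1 else 0::real)" for e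
  have "(\<Sum>a\<in>{1..M}. \<Sum>e\<in>bitvecs n. W p e * (if d (xorv (f a) e) \<noteq> a then 1 else 0))
      = (\<Sum>a\<in>{1..M}. \<Sum>e\<in>bitvecs n. W p e - W p e * ind a e)"
    by (intro sum.cong) (auto simp: ind_def)
  also have "\<dots> = M - (\<Sum>a\<in>{1..M}. \<Sum>e\<in>bitvecs n. W p e * ind a e)"
    by (simp add: sum_subtractf sum_W)
  finally have e1: "1 - err p n M f d = (1 / M) * (\<Sum>a\<in>{1..M}. \<Sum>e\<in>bitvecs n. W p e * ind a e)"
    unfolding err_def using M by (simp add: field_simps)
  have pt: "W p e * ind a e \<le> t * ind a e + W p e * A e" for a e
    using t W_nonneg[OF p, of e] by (auto simp: ind_def A_def t_def)
  have "(\<Sum>a\<in>{1..M}. \<Sum>e\<in>bitvecs n. W p e * ind a e)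
      \<le> (\<Sum>a\<in>{1..M}. \<Sum>e\<in>bitvecs n. t * ind a e + W p e * A e)"
    by (intro sum_mono pt)
  also have "\<dots> = t * (\<Sum>a\<in>{1..M}. \<Sum>e\<in>bitvecs n. ind a e) + M * atyp p n \<delta>"
    by (simp add: sum.distrib sum_distrib_left atyp_def A_def)
  also have "(\<Sum>a\<in>{1..M}. \<Sum>e\<in>bitvecs n. ind a e) = (\<Sum>a\<in>{1..M}. \<Sum>y\<in>bitvecs n. (if d y = a then 1 else 0::real))"
    unfolding ind_def using f by (intro sum.cong refl sum_xorv_shift[where F="\<lambda>y. if d y = _ then 1 else 0"]) auto
  also have "\<dots> = (\<Sum>y\<in>bitvecs n. \<Sum>a\<in>{1..M}. (if d y = a then 1 else 0::real))"
    by (rule sum.swap)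
  also have "\<dots> \<le> (\<Sum>y\<in>bitvecs n. 1)"
    by (intro sum_mono) (simp add: sum.delta)
  also have "\<dots> = 2^n" by (simp add: card_bitvecs)
  finally have "(\<Sum>a\<in>{1..M}. \<Sum>e\<in>bitvecs n. W p e * ind a e) \<le> t * 2^n + M * atyp p n \<delta>"
    using t by (simp add: mult_left_mono)
  hence "(1 / M) * (\<Sum>a\<in>{1..M}. \<Sum>e\<in>bitvecs n. W p e * ind a e) \<le> (1/M) * (t * 2^n + M * atyp p n \<delta>)"
    using M by (intro mult_left_mono) auto
  also have "\<dots> = t * 2^n / M + atyp p n \<delta>" using M by (simp add: field_simps)
  finally show ?thesis unfolding e1 t_def .
qed


definition cc :: "real \<Rightarrow> nat \<Rightarrow> real \<Rightarrow> bool list \<Rightarrow> bool list \<Rightarrow> real" where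
  "cc p n t u x = (\<Sum>e\<in>bitvecs n. W p e * (if t \<le> W p (xorv (xorv u e) x) then 1 else 0))"

definition cost :: "real \<Rightarrow> nat \<Rightarrow> real \<Rightarrow> (nat \<Rightarrow> bool list) \<Rightarrow> nat \<Rightarrow> real" where
  "cost p n t f M = (\<Sum>a\<in>{1..M}. \<Sum>a'\<in>{1..M}. if a = a' then 0 else cc p n t (f a) (f a'))"

lemma cc_nonneg: "0 \<le> p \<Longrightarrow> p \<le> 1 \<Longrightarrow> 0 \<le> cc p n t u x"
  unfolding cc_def by (intro sum_nonneg) (auto simp: W_nonneg)

lemma cc_avg1:
  assumes p: "0 \<le> p" "p \<le> 1" and t: "t > 0" and u: "u \<in> bitvecs n"
  shows "(\<Sum>x\<in>bitvecs n. cc p n t u x) \<le> 1 / t"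
proof -
  have "(\<Sum>x\<in>bitvecs n. cc p n t u x) = (\<Sum>e\<in>bitvecs n. W p e * (\<Sum>x\<in>bitvecs n. (if t \<le> W p (xorv (xorv u e) x) then 1 else 0)))"
    unfolding cc_def sum_distrib_left by (rule sum.swap)
  also have "\<dots> = (\<Sum>e\<in>bitvecs n. W p e * (\<Sum>y\<in>bitvecs n. (if t \<le> W p y then 1 else 0)))"
    using u by (intro sum.cong refl arg_cong2[where f="(*)"] sum_xorv_shift[where F="\<lambda>y. if t \<le> W p y then 1 else 0"] xorv_bv)
  also have "\<dots> \<le> (\<Sum>e\<in>bitvecs n. W p e * (1 / t))"
    using count_typ[OF t p] by (intro sum_mono mult_left_mono) (auto simp: W_nonneg[OF p])
  also have "\<dots> = 1 / t" by (simp add: sum_divide_distrib[symmetric] sum_W)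
  finally show ?thesis .
qed

lemma cc_avg2:
  assumes p: "0 \<le> p" "p \<le> 1" and t: "t > 0" and u: "u \<in> bitvecs n"
  shows "(\<Sum>x\<in>bitvecs n. cc p n t x u) \<le> 1 / t"
proof -
  have "(\<Sum>x\<in>bitvecs n. cc p n t x u) = (\<Sum>e\<in>bitvecs n. W p e * (\<Sum>x\<in>bitvecs n. (if t \<le> W p (xorv (xorv x e) u) then 1 else 0)))"
    unfolding cc_def sum_distrib_left by (rule sum.swap)
  also have "\<dots> = (\<Sum>e\<in>bitvecs n. W p e * (\<Sum>x\<in>bitvecs n. (if t \<le> W p (xorv (xorv e u) x) then 1 else 0)))"
  proof (intro sum.cong refl arg_cong2[where f="(*)"])
    fix e x assume "e \<in> bitvecs n" "x \<in> bitvecs n"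
    hence "xorv (xorv x e) u = xorv (xorv e u) x" using u
      by (intro nth_equalityI) (auto simp: bitvecs_def nth_xorv)
    thus "(if t \<le> W p (xorv (xorv x e) u) then 1 else 0::real) = (if t \<le> W p (xorv (xorv e u) x) then 1 else 0)" by simp
  qed
  also have "\<dots> = (\<Sum>e\<in>bitvecs n. W p e * (\<Sum>y\<in>bitvecs n. (if t \<le> W p y then 1 else 0)))"
    using u by (intro sum.cong refl arg_cong2[where f="(*)"] sum_xorv_shift[where F="\<lambda>y. if t \<le> W p y then 1 else 0"] xorv_bv)
  also have "\<dots> \<le> (\<Sum>e\<in>bitvecs n. W p e * (1 / t))"
    using count_typ[OF t p] by (intro sum_mono mult_left_mono) (auto simp: W_nonneg[OF p])
  also have "\<dots> = 1 / t" by (simp add: sum_divide_distrib[symmetric] sum_W)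
  finally show ?thesis .
qed

lemma greedy:
  assumes p: "0 \<le> p" "p \<le> 1" and t: "t > 0"
  shows "\<exists>f. (\<forall>a\<in>{1..M}. f a \<in> bitvecs n) \<and> cost p n t f M \<le> real M * (real M - 1) / (t * 2^n)"
proof (induction M)
  case 0 show ?case by (intro exI[of _ "\<lambda>_. replicate n False"]) (simp add: cost_def)
next
  case (Suc M)
  then obtain f where f: "\<forall>a\<in>{1..M}. f a \<in> bitvecs n" and c: "cost p n t f M \<le> real M * (real M - 1) / (t * 2^n)"
    by blast
  define g where "g x = (\<Sum>a\<in>{1..M}. cc p n t (f a) x + cc p n t x (f a))" for x
  have "(\<Sum>x\<in>bitvecs n. g x) = (\<Sum>a\<in>{1..M}. (\<Sum>x\<in>bitvecs n. cc p n t (f a) x) + (\<Sum>x\<in>bitvecs n. cc p n t x (f a)))"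
    unfolding g_def by (subst sum.swap) (simp add: sum.distrib)
  also have "\<dots> \<le> (\<Sum>a\<in>{1..M}. 1/t + 1/t)"
    using f by (intro sum_mono add_mono cc_avg1[OF p t] cc_avg2[OF p t]) auto
  also have "\<dots> = card (bitvecs n) * (2 * M / (t * 2^n))" using t by (simp add: card_bitvecs field_simps)
  finally have "(\<Sum>x\<in>bitvecs n. g x) \<le> card (bitvecs n) * (2 * M / (t * 2^n))" .
  moreover have "bitvecs n \<noteq> {}" using card_bitvecs[of n] by (metis card.empty zero_neq_numeral power_not_zero)
  ultimately obtain x where x: "x \<in> bitvecs n" "g x \<le> 2 * M / (t * 2^n)"
    using exists_below_avg[of "bitvecs n" g "2 * M / (t * 2^n)"] finite_bitvecs[of n] by blast
  define f' where "f' = f(Suc M := x)"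
  have f'1: "\<forall>a\<in>{1..Suc M}. f' a \<in> bitvecs n" using f x by (auto simp: f'_def)
  have ins: "{1..Suc M} = insert (Suc M) {1..M}" by auto
  have eqf: "\<And>a. a \<in> {1..M} \<Longrightarrow> f' a = f a" by (auto simp: f'_def)
  have "cost p n t f' (Suc M) = (\<Sum>a'\<in>{1..M}. cc p n t x (f a')) + (\<Sum>a\<in>{1..M}. cc p n t (f a) x + 
        (\<Sum>a'\<in>{1..M}. if a = a' then 0 else cc p n t (f a) (f a')))"
  proof -
    have fx: "f' (Suc M) = x" by (simp add: f'_def)
    have s1: "(\<Sum>a'\<in>{1..M}. cc p n t (f' (Suc M)) (f' a')) = (\<Sum>a'\<in>{1..M}. cc p n t x (f a'))"
      by (rule sum.cong) (auto simp: fx eqf)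
    have s2: "(\<Sum>a\<in>{1..M}. cc p n t (f' a) (f' (Suc M)) +
         (\<Sum>a'\<in>{1..M}. if a = a' then 0 else cc p n t (f' a) (f' a'))) =
       (\<Sum>a\<in>{1..M}. cc p n t (f a) x + (\<Sum>a'\<in>{1..M}. if a = a' then 0 else cc p n t (f a) (f a')))"
      by (rule sum.cong) (auto simp: fx eqf intro!: sum.cong)
    show ?thesis unfolding cost_def ins
      by (simp add: sum.insert s1 s2 del: One_nat_def)
  qed
  also have "\<dots> = g x + cost p n t f M"
    by (simp add: g_def cost_def sum.distrib)
  also have "\<dots> \<le> 2 * M / (t * 2^n) + real M * (real M - 1) / (t * 2^n)"
    using x c by simp
  also have "\<dots> = real (Suc M) * (real (Suc M) - 1) / (t * 2^n)"
    using t by (simp add: field_simps)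
  finally show ?case using f'1 by blast
qed


definition dec :: "real \<Rightarrow> real \<Rightarrow> (nat \<Rightarrow> bool list) \<Rightarrow> nat \<Rightarrow> bool list \<Rightarrow> nat" where
  "dec p t f M y = (if \<exists>a\<in>{1..M}. t \<le> W p (xorv y (f a))
      then (LEAST a. a \<in> {1..M} \<and> t \<le> W p (xorv y (f a))) else 0)"

lemma dec_ind:
  assumes p: "0 \<le> p" "p \<le> 1" and a: "a \<in> {1..M}" and fa: "f a \<in> bitvecs n" and e: "e \<in> bitvecs n"
    and t: "t = 2 powr (-(n*(H p+\<delta>)))"
  shows "(if dec p t f M (xorv (f a) e) \<noteq> a then 1 else 0::real)
    \<le> (if W p e < 2 powr (-(n*(H p+\<delta>))) \<or> 2 powr (-(n*(H p-\<delta>))) < W p e then 1 else 0)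
      + (\<Sum>a'\<in>{1..M}. if a = a' then 0 else (if t \<le> W p (xorv (xorv (f a) e) (f a')) then 1 else 0))"
    (is "?L \<le> ?A + ?S")
proof -
  have S0: "0 \<le> ?S" by (intro sum_nonneg) auto
  show ?thesis
  proof (cases "W p e < t")
    case True thus ?thesis using S0 t by auto
  next
    case False
    let ?y = "xorv (f a) e"
    have cancel: "xorv ?y (f a) = e" using fa e by (intro xorv_cancel2) (simp add: bitvecs_def)
    have Pa: "a \<in> {1..M} \<and> t \<le> W p (xorv ?y (f a))" using a False cancel by simp
    show ?thesis
    proof (cases "\<exists>a'\<in>{1..M}. a' \<noteq> a \<and> t \<le> W p (xorv ?y (f a'))")
      case True
      then obtain a' where a': "a' \<in> {1..M}" "a' \<noteq> a" "t \<le> W p (xorv ?y (f a'))" by blast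
      have "1 \<le> ?S"
        using member_le_sum[where i=a' and f="\<lambda>a'. if a = a' then 0 else (if t \<le> W p (xorv (xorv (f a) e) (f a')) then 1 else 0::real)" and A="{1..M}"] a'
        by (auto split: if_splits)
      moreover have "0 \<le> ?A" by simp
      ultimately show ?thesis by simp
    next
      case False
      hence "(LEAST a'. a' \<in> {1..M} \<and> t \<le> W p (xorv ?y (f a'))) = a"
        using Pa by (intro Least_equality) auto
      hence "dec p t f M ?y = a" using Pa unfolding dec_def by auto
      thus ?thesis using S0 by simp
    qed
  qed
qed

lemma achieve_shot:
  assumes p: "0 \<le> p" "p \<le> 1" and M: "M > 0"
  shows "\<exists>f d. (\<forall>a\<in>{1..M}. f a \<in> bitvecs n) \<and>
     err p n M f d \<le> atyp p n \<delta> + M / (2 powr (-(n*(H p+\<delta>))) * 2^n)"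
proof -
  define t where "t = 2 powr (-(n*(H p+\<delta>)))"
  have t0: "t > 0" by (simp add: t_def)
  obtain f where f: "\<forall>a\<in>{1..M}. f a \<in> bitvecs n" and c: "cost p n t f M \<le> real M * (real M - 1) / (t * 2^n)"
    using greedy[OF p t0] by blast
  define A where "A e = (if W p e < 2 powr (-(n*(H p+\<delta>))) \<or> 2 powr (-(n*(H p-\<delta>))) < W p e then 1 else 0::real)" for e
  define G where "G a a' e = (if a = a' then 0 else (if t \<le> W p (xorv (xorv (f a) e) (f a')) then 1 else 0::real))" for a a' e
  have "(\<Sum>a\<in>{1..M}. \<Sum>e\<in>bitvecs n. W p e * (if dec p t f M (xorv (f a) e) \<noteq> a then 1 else 0))
      \<le> (\<Sum>a\<in>{1..M}. \<Sum>e\<in>bitvecs n. W p e * (A e + (\<Sum>a'\<in>{1..M}. G a a' e)))"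
    unfolding A_def G_def
    by (intro sum_mono mult_left_mono dec_ind[OF p _ _ _ t_def] W_nonneg[OF p]) (use f in auto)
  also have "\<dots> = (\<Sum>a\<in>{1..M}. atyp p n \<delta> + (\<Sum>a'\<in>{1..M}. \<Sum>e\<in>bitvecs n. W p e * G a a' e))"
    unfolding distrib_left sum.distrib atyp_def A_def sum_distrib_left
    by (simp add: sum.swap[of _ "bitvecs n"])
  also have "\<dots> = M * atyp p n \<delta> + cost p n t f M"
    unfolding sum.distrib cost_def
    by (auto simp: cc_def G_def intro!: sum.cong)
  also have "\<dots> \<le> M * atyp p n \<delta> + real M * (real M - 1) / (t * 2^n)" using c by simp
  finally have "err p n M f (dec p t f M) \<le> (1/M) * (M * atyp p n \<delta> + real M * (real M - 1) / (t * 2^n))"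
    unfolding err_def using M by (intro mult_left_mono) auto
  also have "\<dots> = atyp p n \<delta> + (real M - 1) / (t * 2^n)" using M by (simp add: field_simps)
  also have "\<dots> \<le> atyp p n \<delta> + M / (t * 2^n)" using t0 by (simp add: divide_right_mono)
  finally show ?thesis using f unfolding t_def by blast
qed


lemma pow_lim: "\<delta> > 0 \<Longrightarrow> (\<lambda>n. 2 powr (-(real n * \<delta>))) \<longlonglongrightarrow> 0"
proof -
  assume d: "\<delta> > 0"
  have eq: "2 powr (-(real n * \<delta>)) = (2 powr (-\<delta>)) ^ n" for n
    by (simp add: powr_realpow[symmetric] powr_powr mult.commute)
  have "(2::real) powr (-\<delta>) < 2 powr 0" using d by (intro powr_less_mono) auto
  hence "(\<lambda>n. (2 powr (-\<delta>)) ^ n) \<longlonglongrightarrow> 0" by (intro LIMSEQ_realpow_zero) auto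
  thus ?thesis unfolding eq .
qed

lemma eventually_small:
  assumes "\<delta> > 0" "c > 0"
  shows "eventually (\<lambda>n. K / real n < c \<and> 2 powr (-(real n * \<delta>)) < c \<and> n > 0) sequentially"
proof -
  have "eventually (\<lambda>n. K / real n < c) sequentially"
    using order_tendstoD(2)[OF lim_const_over_n[of K] assms(2)] .
  moreover have "eventually (\<lambda>n. 2 powr (-(real n * \<delta>)) < c) sequentially"
    using order_tendstoD(2)[OF pow_lim[OF assms(1)] assms(2)] .
  moreover have "eventually (\<lambda>n. n > (0::nat)) sequentially" by (rule eventually_gt_at_top)
  ultimately show ?thesis by eventually_elim auto
qed

lemma num_msgs_ge1: "R \<ge> 0 \<Longrightarrow> num_msgs n R \<ge> 1"
proof -
  assume R: "R \<ge> 0"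
  have "1 \<le> 2 powr (real n * R)" using powr_mono[of 0 "real n * R" "2::real"] R by simp
  thus ?thesis unfolding num_msgs_def by linarith
qed

lemma num_msgs_le: "R \<ge> 0 \<Longrightarrow> real (num_msgs n R) \<le> 2 powr (real n * R)"
proof -
  assume R: "R \<ge> 0"
  have "1 \<le> 2 powr (real n * R)" using powr_mono[of 0 "real n * R" "2::real"] R by simp
  thus ?thesis unfolding num_msgs_def by simp
qed

lemma num_msgs_ge: "R \<ge> 0 \<Longrightarrow> 2 powr (real n * R) / 2 \<le> real (num_msgs n R)"
proof -
  assume R: "R \<ge> 0"
  have x1: "1 \<le> 2 powr (real n * R)" using powr_mono[of 0 "real n * R" "2::real"] R by simp
  have "real (num_msgs n R) = of_int \<lfloor>2 powr (real n * R)\<rfloor>" unfolding num_msgs_def using x1 by simp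
  moreover have "2 powr (real n * R) - 1 < of_int \<lfloor>2 powr (real n * R)\<rfloor>" by linarith
  moreover have "(1::real) \<le> of_int \<lfloor>2 powr (real n * R)\<rfloor>" using x1 by (simp add: one_le_floor)
  ultimately show ?thesis by linarith
qed


lemma achieve:
  assumes p: "0 \<le> p" "p \<le> 1" and R: "R = 0 \<or> (0 \<le> R \<and> R < bsc_capacity p)" and eps: "\<epsilon> > 0"
  shows "\<exists>N. \<forall>n\<ge>N. \<exists>f d. (\<forall>a\<in>{1..num_msgs n R}. f a \<in> bitvecs n) \<and> err p n (num_msgs n R) f d \<le> \<epsilon>"
proof (cases "R = 0")
  case True
  have M1: "num_msgs n R = 1" for n using True by (simp add: num_msgs_def)
  show ?thesis
  proof (intro exI allI impI)
    fix n :: nat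
    show "(\<forall>a\<in>{1..num_msgs n R}. replicate n False \<in> bitvecs n) \<and> err p n (num_msgs n R) (\<lambda>_. replicate n False) (\<lambda>_. 1) \<le> \<epsilon>"
      using eps by (simp add: M1 err_def bitvecs_def)
  qed
next
  case False
  with R have R0: "0 \<le> R" "R < bsc_capacity p" by auto
  define \<delta> where "\<delta> = (bsc_capacity p - R) / 2"
  have d: "\<delta> > 0" using R0 by (simp add: \<delta>_def)
  obtain K where K: "\<forall>n>0. atyp p n \<delta> \<le> K / n" using atyp_bound[OF p d] by blast
  obtain N where N: "\<forall>n\<ge>N. K / real n < \<epsilon>/2 \<and> 2 powr (-(real n * \<delta>)) < \<epsilon>/2 \<and> n > 0"
    using eventually_small[OF d, of "\<epsilon>/2" K] eps unfolding eventually_sequentially by auto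
  show ?thesis
  proof (intro exI[of _ N] allI impI)
    fix n assume n: "n \<ge> N"
    define M where "M = num_msgs n R"
    have M0: "M > 0" using num_msgs_ge1[OF R0(1), where n=n] by (simp add: M_def)
    obtain f d where fd: "\<forall>a\<in>{1..M}. f a \<in> bitvecs n"
        "err p n M f d \<le> atyp p n \<delta> + M / (2 powr (-(n*(H p+\<delta>))) * 2^n)"
      using achieve_shot[OF p M0] by blast
    have "M / (2 powr (-(n*(H p+\<delta>))) * 2^n) \<le> 2 powr (real n * R) / (2 powr (-(n*(H p+\<delta>))) * 2 powr n)"
      using num_msgs_le[OF R0(1), of n] by (simp add: M_def powr_realpow divide_right_mono)
    also have "\<dots> = 2 powr (-(real n * \<delta>))"
      apply (simp add: powr_add[symmetric] powr_diff[symmetric])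
      apply (rule arg_cong[where f="\<lambda>x. 2 powr x"])
      apply (simp add: \<delta>_def bsc_capacity_def field_simps)
      done
    finally have "err p n M f d \<le> \<epsilon>/2 + \<epsilon>/2"
      using fd(2) K N n by (smt (verit))
    thus "\<exists>f d. (\<forall>a\<in>{1..num_msgs n R}. f a \<in> bitvecs n) \<and> err p n (num_msgs n R) f d \<le> \<epsilon>"
      using fd(1) unfolding M_def by auto
  qed
qed

lemma converse:
  assumes p: "0 \<le> p" "p \<le> 1" and R0: "R \<ge> 0"
    and ach: "\<exists>N. \<forall>n\<ge>N. \<exists>f d. (\<forall>a\<in>{1..num_msgs n R}. f a \<in> bitvecs n) \<and> err p n (num_msgs n R) f d \<le> 1/2"
  shows "R \<le> bsc_capacity p"
proof (rule ccontr)
  assume "\<not> ?thesis"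
  hence RC: "R > bsc_capacity p" by simp
  define \<delta> where "\<delta> = (R - bsc_capacity p) / 2"
  have d: "\<delta> > 0" using RC by (simp add: \<delta>_def)
  obtain K where K: "\<forall>n>0. atyp p n \<delta> \<le> K / n" using atyp_bound[OF p d] by blast
  obtain N1 where N1: "\<forall>n\<ge>N1. K / real n < 1/8 \<and> 2 powr (-(real n * \<delta>)) < 1/8 \<and> n > 0"
    using eventually_small[OF d, of "1/8" K] unfolding eventually_sequentially by auto
  obtain N2 where N2: "\<forall>n\<ge>N2. \<exists>f d. (\<forall>a\<in>{1..num_msgs n R}. f a \<in> bitvecs n) \<and> err p n (num_msgs n R) f d \<le> 1/2"
    using ach by blast
  define n where "n = max N1 N2"
  define M where "M = num_msgs n R"
  obtain f dd where fd: "\<forall>a\<in>{1..M}. f a \<in> bitvecs n" "err p n M f dd \<le> 1/2"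
    using N2[rule_format, of n] unfolding M_def n_def by auto
  have M0: "M > 0" using num_msgs_ge1[OF R0, where n=n] by (simp add: M_def)
  have Mge: "2 powr (real n * R) / 2 \<le> M" using num_msgs_ge[OF R0] by (simp add: M_def)
  have sh: "1 - err p n M f dd \<le> 2 powr (-(n*(H p-\<delta>))) * 2^n / M + atyp p n \<delta>"
    using converse_shot[OF p M0 fd(1)] .
  have pos: "0 < 2 powr (real n * R) / 2" by simp
  have "2 powr (-(n*(H p-\<delta>))) * 2^n / M \<le> 2 powr (-(n*(H p-\<delta>))) * 2^n / (2 powr (real n * R) / 2)"
    by (rule divide_left_mono) (use Mge pos M0 in auto)
  also have "\<dots> = 2 * (2 powr (-(n*(H p-\<delta>))) * 2 powr n / 2 powr (real n * R))"
    by (simp add: powr_realpow)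
  also have "2 powr (-(n*(H p-\<delta>))) * 2 powr n / 2 powr (real n * R) = 2 powr (-(real n * \<delta>))"
    apply (simp add: powr_add[symmetric] powr_diff[symmetric])
    apply (rule arg_cong[where f="\<lambda>x. 2 powr x"])
    apply (simp add: \<delta>_def bsc_capacity_def field_simps)
    done
  finally have "1 - err p n M f dd < 2 * (1/8) + 1/8"
    using sh K N1 unfolding n_def by (smt (verit) max.cobounded1)
  thus False using fd(2) by simp
qed


lemma sumW_lr: "(\<Sum>e\<in>bitvecs n. X * W p e * Y) = X * Y"
proof -
  have "(\<Sum>e\<in>bitvecs n. X * W p e * Y) = X * (\<Sum>e\<in>bitvecs n. W p e) * Y"
    by (simp add: sum_distrib_left sum_distrib_right)
  thus ?thesis by (simp add: sum_W)
qed

lemma sumW_l: "(\<Sum>e\<in>bitvecs n. W p e * Y) = Y"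
  using sumW_lr[where X=1 and Y=Y and p=p and n=n] by simp

lemma E1: "(\<Sum>e13\<in>bitvecs n. \<Sum>e14\<in>bitvecs n. \<Sum>e23\<in>bitvecs n. \<Sum>e34\<in>bitvecs n.
    W p13 e13 * W p14 e14 * W p23 e23 * W p34 e34 * F e14) = (\<Sum>e14\<in>bitvecs n. W p14 e14 * F e14)"
proof -
  have "(\<Sum>e13\<in>bitvecs n. \<Sum>e14\<in>bitvecs n. \<Sum>e23\<in>bitvecs n. \<Sum>e34\<in>bitvecs n.
    W p13 e13 * W p14 e14 * W p23 e23 * W p34 e34 * F e14)
    = (\<Sum>e13\<in>bitvecs n. \<Sum>e14\<in>bitvecs n. W p13 e13 * (W p14 e14 * F e14))"
    by (simp only: sumW_lr, simp only: mult.assoc)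
  also have "\<dots> = (\<Sum>e14\<in>bitvecs n. W p14 e14 * F e14)"
    by (simp only: sum_distrib_left[symmetric] sumW_l)
  finally show ?thesis .
qed

lemma E2: "(\<Sum>e13\<in>bitvecs n. \<Sum>e14\<in>bitvecs n. \<Sum>e23\<in>bitvecs n. \<Sum>e34\<in>bitvecs n.
    W p13 e13 * W p14 e14 * W p23 e23 * W p34 e34 * G (xorv (xorv e13 e23) e34))
    = (\<Sum>e\<in>bitvecs n. W (conv (conv p13 p23) p34) e * G e)"
proof -
  define h where "h x = (\<Sum>e34\<in>bitvecs n. W p34 e34 * G (xorv x e34))" for x
  have "(\<Sum>e13\<in>bitvecs n. \<Sum>e14\<in>bitvecs n. \<Sum>e23\<in>bitvecs n. \<Sum>e34\<in>bitvecs n.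
    W p13 e13 * W p14 e14 * W p23 e23 * W p34 e34 * G (xorv (xorv e13 e23) e34))
    = (\<Sum>e13\<in>bitvecs n. \<Sum>e14\<in>bitvecs n. \<Sum>e23\<in>bitvecs n. W p14 e14 * (W p13 e13 * W p23 e23 * h (xorv e13 e23)))"
    unfolding h_def by (simp add: sum_distrib_left mult_ac)
  also have "\<dots> = (\<Sum>e13\<in>bitvecs n. \<Sum>e14\<in>bitvecs n. W p14 e14 * (\<Sum>e23\<in>bitvecs n. W p13 e13 * W p23 e23 * h (xorv e13 e23)))"
    by (simp only: sum_distrib_left)
  also have "\<dots> = (\<Sum>e13\<in>bitvecs n. \<Sum>e23\<in>bitvecs n. W p13 e13 * W p23 e23 * h (xorv e13 e23))"
    by (simp only: sumW_l)
  also have "\<dots> = (\<Sum>x\<in>bitvecs n. W (conv p13 p23) x * h x)"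
    by (rule conv_sum)
  also have "\<dots> = (\<Sum>x\<in>bitvecs n. \<Sum>e34\<in>bitvecs n. W (conv p13 p23) x * W p34 e34 * G (xorv x e34))"
    unfolding h_def by (simp add: sum_distrib_left mult_ac)
  also have "\<dots> = (\<Sum>e\<in>bitvecs n. W (conv (conv p13 p23) p34) e * G e)"
    by (rule conv_sum)
  finally show ?thesis .
qed


lemma serial_ind:
  fixes decA decB :: "bool list \<Rightarrow> nat"
  assumes fa: "f a \<in> bitvecs n" and gb: "g b \<in> bitvecs n"
    and e: "e13 \<in> bitvecs n" "e14 \<in> bitvecs n" "e23 \<in> bitvecs n" "e34 \<in> bitvecs n"
  defines "I \<equiv> (let y13 = xorv (f a) e13; y14 = xorv (f a) e14; y23 = xorv (g b) e23;
               x34 = xorv y13 y23; y34 = xorv x34 e34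
           in if serial_decode f decA decB y14 y34 \<noteq> (a, b) then 1 else 0::real)"
    and "IA \<equiv> (if decA (xorv (f a) e14) \<noteq> a then 1 else 0::real)"
    and "IB \<equiv> (if decB (xorv (g b) (xorv (xorv e13 e23) e34)) \<noteq> b then 1 else 0::real)"
  shows "I \<le> IA + IB \<and> IA \<le> I \<and> IB \<le> I"
proof -
  have key: "xorv (xorv (xorv (xorv (f a) e13) (xorv (g b) e23)) e34) (f a) = xorv (g b) (xorv (xorv e13 e23) e34)"
    using fa gb e by (intro nth_equalityI) (auto simp: bitvecs_def nth_xorv)
  show ?thesis
  proof (cases "decA (xorv (f a) e14) = a")
    case True
    hence "I = IB" unfolding I_def IB_def serial_decode_def Let_def using key by simp
    moreover have "IA = 0" using True by (simp add: IA_def)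
    moreover have "0 \<le> IB" by (simp add: IB_def)
    ultimately show ?thesis by simp
  next
    case False
    hence "I = 1" "IA = 1" unfolding I_def IA_def serial_decode_def Let_def by auto
    moreover have "0 \<le> IB" "IB \<le> 1" by (auto simp: IB_def)
    ultimately show ?thesis by simp
  qed
qed

lemma serial_bounds:
  assumes p: "0 \<le> p13" "p13 \<le> 1" "0 \<le> p14" "p14 \<le> 1" "0 \<le> p23" "p23 \<le> 1" "0 \<le> p34" "p34 \<le> 1"
    and f: "\<forall>a\<in>{1..MA}. f a \<in> bitvecs n" and g: "\<forall>b\<in>{1..MB}. g b \<in> bitvecs n"
    and MA: "MA > 0" and MB: "MB > 0"
  shows "serial_error_prob p13 p14 p23 p34 n MA MB f g decA decB
           \<le> err p14 n MA f decA + err (conv (conv p13 p23) p34) n MB g decB"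
    and "err p14 n MA f decA \<le> serial_error_prob p13 p14 p23 p34 n MA MB f g decA decB"
    and "err (conv (conv p13 p23) p34) n MB g decB \<le> serial_error_prob p13 p14 p23 p34 n MA MB f g decA decB"
proof -
  define I where "I a b e13 e14 e23 e34 = (let y13 = xorv (f a) e13; y14 = xorv (f a) e14; y23 = xorv (g b) e23;
               x34 = xorv y13 y23; y34 = xorv x34 e34
           in if serial_decode f decA decB y14 y34 \<noteq> (a, b) then 1 else 0::real)" for a b e13 e14 e23 e34
  define FA where "FA a e14 = (if decA (xorv (f a) e14) \<noteq> a then 1 else 0::real)" for a e14
  define GB where "GB b e = (if decB (xorv (g b) e) \<noteq> b then 1 else 0::real)" for b e
  define w where "w e13 e14 e23 e34 = W p13 e13 * W p14 e14 * W p23 e23 * W p34 e34" for e13 e14 e23 e34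
  define inner where "inner a b = (\<Sum>e13\<in>bitvecs n. \<Sum>e14\<in>bitvecs n. \<Sum>e23\<in>bitvecs n. \<Sum>e34\<in>bitvecs n.
      w e13 e14 e23 e34 * I a b e13 e14 e23 e34)" for a b
  define Aa where "Aa a = (\<Sum>e14\<in>bitvecs n. W p14 e14 * FA a e14)" for a
  define Bb where "Bb b = (\<Sum>e\<in>bitvecs n. W (conv (conv p13 p23) p34) e * GB b e)" for b
  have w0: "0 \<le> w e13 e14 e23 e34" for e13 e14 e23 e34
    unfolding w_def using p by (intro mult_nonneg_nonneg W_nonneg) auto
  have ser: "serial_error_prob p13 p14 p23 p34 n MA MB f g decA decB = 1 / (real MA * real MB) * (\<Sum>a\<in>{1..MA}. \<Sum>b\<in>{1..MB}. inner a b)"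
    unfolding serial_error_prob_def inner_def w_def I_def ..
  have eA: "err p14 n MA f decA = 1 / real MA * (\<Sum>a\<in>{1..MA}. Aa a)"
    unfolding err_def Aa_def FA_def ..
  have eB: "err (conv (conv p13 p23) p34) n MB g decB = 1 / real MB * (\<Sum>b\<in>{1..MB}. Bb b)"
    unfolding err_def Bb_def GB_def ..
  have E1': "(\<Sum>e13\<in>bitvecs n. \<Sum>e14\<in>bitvecs n. \<Sum>e23\<in>bitvecs n. \<Sum>e34\<in>bitvecs n.
      w e13 e14 e23 e34 * FA a e14) = Aa a" for a
    unfolding w_def Aa_def by (rule E1)
  have E2': "(\<Sum>e13\<in>bitvecs n. \<Sum>e14\<in>bitvecs n. \<Sum>e23\<in>bitvecs n. \<Sum>e34\<in>bitvecs n.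
      w e13 e14 e23 e34 * GB b (xorv (xorv e13 e23) e34)) = Bb b" for b
    unfolding w_def Bb_def by (rule E2)
  have pt: "I a b e13 e14 e23 e34 \<le> FA a e14 + GB b (xorv (xorv e13 e23) e34) \<and>
            FA a e14 \<le> I a b e13 e14 e23 e34 \<and> GB b (xorv (xorv e13 e23) e34) \<le> I a b e13 e14 e23 e34"
    if "a \<in> {1..MA}" "b \<in> {1..MB}" "e13 \<in> bitvecs n" "e14 \<in> bitvecs n" "e23 \<in> bitvecs n" "e34 \<in> bitvecs n"
    for a b e13 e14 e23 e34
    unfolding I_def FA_def GB_def using f g that by (intro serial_ind) auto
  have up: "inner a b \<le> Aa a + Bb b" if "a \<in> {1..MA}" "b \<in> {1..MB}" for a b
  proof -
    have "inner a b \<le> (\<Sum>e13\<in>bitvecs n. \<Sum>e14\<in>bitvecs n. \<Sum>e23\<in>bitvecs n. \<Sum>e34\<in>bitvecs n.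
      w e13 e14 e23 e34 * (FA a e14 + GB b (xorv (xorv e13 e23) e34)))"
      unfolding inner_def using pt[OF that] w0 by (intro sum_mono mult_left_mono) auto
    also have "\<dots> = Aa a + Bb b"
      by (simp only: distrib_left sum.distrib E1' E2')
    finally show ?thesis .
  qed
  have loA: "Aa a \<le> inner a b" if "a \<in> {1..MA}" "b \<in> {1..MB}" for a b
    unfolding inner_def E1'[symmetric] using pt[OF that] w0 by (intro sum_mono mult_left_mono) auto
  have loB: "Bb b \<le> inner a b" if "a \<in> {1..MA}" "b \<in> {1..MB}" for a b
    unfolding inner_def E2'[symmetric] using pt[OF that] w0 by (intro sum_mono mult_left_mono) auto
  have pos: "0 < real MA * real MB" using MA MB by simp
  have "(\<Sum>a\<in>{1..MA}. \<Sum>b\<in>{1..MB}. inner a b) \<le> (\<Sum>a\<in>{1..MA}. \<Sum>b\<in>{1..MB}. Aa a + Bb b)"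
    by (intro sum_mono up) auto
  also have "\<dots> = MB * (\<Sum>a\<in>{1..MA}. Aa a) + MA * (\<Sum>b\<in>{1..MB}. Bb b)"
    by (simp add: sum.distrib sum_distrib_left)
  finally have "1 / (real MA * real MB) * (\<Sum>a\<in>{1..MA}. \<Sum>b\<in>{1..MB}. inner a b)
     \<le> 1 / (real MA * real MB) * (MB * (\<Sum>a\<in>{1..MA}. Aa a) + MA * (\<Sum>b\<in>{1..MB}. Bb b))"
    using pos by (intro mult_left_mono) auto
  also have "\<dots> = 1 / real MA * (\<Sum>a\<in>{1..MA}. Aa a) + 1 / real MB * (\<Sum>b\<in>{1..MB}. Bb b)"
    using MA MB by (simp add: field_simps)
  finally show "serial_error_prob p13 p14 p23 p34 n MA MB f g decA decB
           \<le> err p14 n MA f decA + err (conv (conv p13 p23) p34) n MB g decB"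
    unfolding ser eA eB .
  have "MB * (\<Sum>a\<in>{1..MA}. Aa a) = (\<Sum>a\<in>{1..MA}. \<Sum>b\<in>{1..MB}. Aa a)"
    by (simp add: sum_distrib_left)
  also have "\<dots> \<le> (\<Sum>a\<in>{1..MA}. \<Sum>b\<in>{1..MB}. inner a b)"
    by (intro sum_mono loA) auto
  finally have "1 / (real MA * real MB) * (MB * (\<Sum>a\<in>{1..MA}. Aa a)) \<le> 1 / (real MA * real MB) * (\<Sum>a\<in>{1..MA}. \<Sum>b\<in>{1..MB}. inner a b)"
    using pos by (intro mult_left_mono) auto
  moreover have "1 / (real MA * real MB) * (MB * (\<Sum>a\<in>{1..MA}. Aa a)) = 1 / real MA * (\<Sum>a\<in>{1..MA}. Aa a)"
    using MB by (simp add: field_simps)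
  ultimately show "err p14 n MA f decA \<le> serial_error_prob p13 p14 p23 p34 n MA MB f g decA decB"
    unfolding ser eA by simp
  have "MA * (\<Sum>b\<in>{1..MB}. Bb b) = (\<Sum>a\<in>{1..MA}. \<Sum>b\<in>{1..MB}. Bb b)"
    by (simp add: sum_distrib_left)
  also have "\<dots> \<le> (\<Sum>a\<in>{1..MA}. \<Sum>b\<in>{1..MB}. inner a b)"
    by (intro sum_mono loB) auto
  finally have "1 / (real MA * real MB) * (MA * (\<Sum>b\<in>{1..MB}. Bb b)) \<le> 1 / (real MA * real MB) * (\<Sum>a\<in>{1..MA}. \<Sum>b\<in>{1..MB}. inner a b)"
    using pos by (intro mult_left_mono) auto
  moreover have "1 / (real MA * real MB) * (MA * (\<Sum>b\<in>{1..MB}. Bb b)) = 1 / real MB * (\<Sum>b\<in>{1..MB}. Bb b)"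
    using MA by (simp add: field_simps)
  ultimately show "err (conv (conv p13 p23) p34) n MB g decB \<le> serial_error_prob p13 p14 p23 p34 n MA MB f g decA decB"
    unfolding ser eB by simp
qed


lemma conv_range: "0 \<le> p \<Longrightarrow> p \<le> 1 \<Longrightarrow> 0 \<le> q \<Longrightarrow> q \<le> 1 \<Longrightarrow> 0 \<le> conv p q \<and> conv p q \<le> 1"
  unfolding conv_def by (smt (verit) mult_nonneg_nonneg mult_left_le_one_le mult_right_le_one_le)

lemma achievable_both:
  assumes p: "0 \<le> p13" "p13 \<le> 1" "0 \<le> p14" "p14 \<le> 1" "0 \<le> p23" "p23 \<le> 1" "0 \<le> p34" "p34 \<le> 1"
    and RA: "RA = 0 \<or> (0 \<le> RA \<and> RA < bsc_capacity p14)"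
    and RB: "RB = 0 \<or> (0 \<le> RB \<and> RB < bsc_capacity (conv (conv p13 p23) p34))"
  shows "serial_achievable p13 p14 p23 p34 (RA, RB)"
proof -
  have q: "0 \<le> conv (conv p13 p23) p34" "conv (conv p13 p23) p34 \<le> 1"
    using conv_range[OF conv_range[OF p(1,2,5,6), THEN conjunct1] conv_range[OF p(1,2,5,6), THEN conjunct2] p(7,8)] by auto
  have RA0: "RA \<ge> 0" and RB0: "RB \<ge> 0" using RA RB by auto
  show ?thesis unfolding serial_achievable_def fst_conv snd_conv
  proof (intro conjI RA0 RB0 allI impI)
    fix \<epsilon> :: real assume eps: "\<epsilon> > 0"
    obtain N1 where N1: "\<forall>n\<ge>N1. \<exists>f d. (\<forall>a\<in>{1..num_msgs n RA}. f a \<in> bitvecs n) \<and> err p14 n (num_msgs n RA) f d \<le> \<epsilon>/2"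
      using achieve[OF p(3,4) RA, of "\<epsilon>/2"] eps by auto
    obtain N2 where N2: "\<forall>n\<ge>N2. \<exists>f d. (\<forall>a\<in>{1..num_msgs n RB}. f a \<in> bitvecs n) \<and> err (conv (conv p13 p23) p34) n (num_msgs n RB) f d \<le> \<epsilon>/2"
      using achieve[OF q RB, of "\<epsilon>/2"] eps by auto
    show "\<exists>N. \<forall>n\<ge>N. \<exists>f g decA decB.
        (\<forall>a\<in>{1..num_msgs n RA}. f a \<in> bitvecs n) \<and>
        (\<forall>b\<in>{1..num_msgs n RB}. g b \<in> bitvecs n) \<and>
        serial_error_prob p13 p14 p23 p34 n (num_msgs n RA) (num_msgs n RB) f g decA decB \<le> \<epsilon>"
    proof (intro exI[of _ "max N1 N2"] allI impI)
      fix n assume n: "max N1 N2 \<le> n"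
      obtain f dA where fA: "\<forall>a\<in>{1..num_msgs n RA}. f a \<in> bitvecs n" "err p14 n (num_msgs n RA) f dA \<le> \<epsilon>/2"
        using N1 n by auto
      obtain g dB where gB: "\<forall>a\<in>{1..num_msgs n RB}. g a \<in> bitvecs n" "err (conv (conv p13 p23) p34) n (num_msgs n RB) g dB \<le> \<epsilon>/2"
        using N2 n by auto
      have MA: "num_msgs n RA > 0" using num_msgs_ge1[OF RA0, where n=n] by simp
      have MB: "num_msgs n RB > 0" using num_msgs_ge1[OF RB0, where n=n] by simp
      have "serial_error_prob p13 p14 p23 p34 n (num_msgs n RA) (num_msgs n RB) f g dA dB \<le> \<epsilon>"
        using serial_bounds(1)[OF p fA(1) gB(1) MA MB, where decA=dA and decB=dB] fA(2) gB(2) by simp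
      thus "\<exists>f g decA decB.
        (\<forall>a\<in>{1..num_msgs n RA}. f a \<in> bitvecs n) \<and>
        (\<forall>b\<in>{1..num_msgs n RB}. g b \<in> bitvecs n) \<and>
        serial_error_prob p13 p14 p23 p34 n (num_msgs n RA) (num_msgs n RB) f g decA decB \<le> \<epsilon>"
        using fA(1) gB(1) by blast
    qed
  qed
qed

lemma achievable_in_rect:
  assumes p: "0 \<le> p13" "p13 \<le> 1" "0 \<le> p14" "p14 \<le> 1" "0 \<le> p23" "p23 \<le> 1" "0 \<le> p34" "p34 \<le> 1"
    and ach: "serial_achievable p13 p14 p23 p34 (RA, RB)"
  shows "0 \<le> RA \<and> 0 \<le> RB \<and> RA \<le> bsc_capacity p14 \<and> RB \<le> bsc_capacity (conv (conv p13 p23) p34)"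
proof -
  have q: "0 \<le> conv (conv p13 p23) p34" "conv (conv p13 p23) p34 \<le> 1"
    using conv_range[OF conv_range[OF p(1,2,5,6), THEN conjunct1] conv_range[OF p(1,2,5,6), THEN conjunct2] p(7,8)] by auto
  have RA0: "RA \<ge> 0" and RB0: "RB \<ge> 0" using ach unfolding serial_achievable_def by auto
  have all: "\<forall>\<epsilon>>0. \<exists>N. \<forall>n\<ge>N. \<exists>f g decA decB.
        (\<forall>a\<in>{1..num_msgs n RA}. f a \<in> bitvecs n) \<and>
        (\<forall>b\<in>{1..num_msgs n RB}. g b \<in> bitvecs n) \<and>
        serial_error_prob p13 p14 p23 p34 n (num_msgs n RA) (num_msgs n RB) f g decA decB \<le> \<epsilon>"
    using ach unfolding serial_achievable_def fst_conv snd_conv by blast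
  have "\<exists>N. \<forall>n\<ge>N. \<exists>f g decA decB.
        (\<forall>a\<in>{1..num_msgs n RA}. f a \<in> bitvecs n) \<and>
        (\<forall>b\<in>{1..num_msgs n RB}. g b \<in> bitvecs n) \<and>
        serial_error_prob p13 p14 p23 p34 n (num_msgs n RA) (num_msgs n RB) f g decA decB \<le> 1/2"
    by (rule all[rule_format]) simp
  then obtain N where N: "\<forall>n\<ge>N. \<exists>f g decA decB.
        (\<forall>a\<in>{1..num_msgs n RA}. f a \<in> bitvecs n) \<and>
        (\<forall>b\<in>{1..num_msgs n RB}. g b \<in> bitvecs n) \<and>
        serial_error_prob p13 p14 p23 p34 n (num_msgs n RA) (num_msgs n RB) f g decA decB \<le> 1/2" by blast
  have A: "\<exists>f d. (\<forall>a\<in>{1..num_msgs n RA}. f a \<in> bitvecs n) \<and> err p14 n (num_msgs n RA) f d \<le> 1/2"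
      and B: "\<exists>g d. (\<forall>a\<in>{1..num_msgs n RB}. g a \<in> bitvecs n) \<and> err (conv (conv p13 p23) p34) n (num_msgs n RB) g d \<le> 1/2"
    if n: "n \<ge> N" for n
  proof -
    obtain f g dA dB where fg: "\<forall>a\<in>{1..num_msgs n RA}. f a \<in> bitvecs n" "\<forall>b\<in>{1..num_msgs n RB}. g b \<in> bitvecs n"
      "serial_error_prob p13 p14 p23 p34 n (num_msgs n RA) (num_msgs n RB) f g dA dB \<le> 1/2"
      using N n by blast
    have MA: "num_msgs n RA > 0" using num_msgs_ge1[OF RA0, where n=n] by simp
    have MB: "num_msgs n RB > 0" using num_msgs_ge1[OF RB0, where n=n] by simp
    show "\<exists>f d. (\<forall>a\<in>{1..num_msgs n RA}. f a \<in> bitvecs n) \<and> err p14 n (num_msgs n RA) f d \<le> 1/2"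
      using serial_bounds(2)[OF p fg(1,2) MA MB, where decA=dA and decB=dB] fg by (intro exI[of _ f] exI[of _ dA]) auto
    show "\<exists>g d. (\<forall>a\<in>{1..num_msgs n RB}. g a \<in> bitvecs n) \<and> err (conv (conv p13 p23) p34) n (num_msgs n RB) g d \<le> 1/2"
      using serial_bounds(3)[OF p fg(1,2) MA MB, where decA=dA and decB=dB] fg by (intro exI[of _ g] exI[of _ dB]) auto
  qed
  have "RA \<le> bsc_capacity p14" using converse[OF p(3,4) RA0] A by blast
  moreover have "RB \<le> bsc_capacity (conv (conv p13 p23) p34)" using converse[OF q RB0] B by blast
  ultimately show ?thesis using RA0 RB0 by simp
qed


theorem theorem2:
  fixes p13 p14 p23 p34 :: real
  assumes "0 \<le> p13" "p13 \<le> 1" "0 \<le> p14" "p14 \<le> 1"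
      and "0 \<le> p23" "p23 \<le> 1" "0 \<le> p34" "p34 \<le> 1"
  defines "p' \<equiv> ((1 - p13) * (1 - p23) + p13 * p23) * p34
                + (p13 * (1 - p23) + (1 - p13) * p23) * (1 - p34)"
  shows "serial_region p13 p14 p23 p34 =
         convex hull {(RA, RB). 0 \<le> RA \<and> 0 \<le> RB \<and>
                                RA \<le> bsc_capacity p14 \<and> RB \<le> bsc_capacity p'}"
proof -
  note p = assms(1-8)
  have pq: "p' = conv (conv p13 p23) p34" unfolding p'_def conv_def by (simp add: algebra_simps)
  define C1 where "C1 = bsc_capacity p14"
  define C2 where "C2 = bsc_capacity p'"
  have rect: "{(RA, RB). 0 \<le> RA \<and> 0 \<le> RB \<and> RA \<le> bsc_capacity p14 \<and> RB \<le> bsc_capacity p'} = {0..C1} \<times> {0..C2}"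
    by (auto simp: C1_def C2_def)
  have hull: "convex hull ({0..C1} \<times> {0..C2}) = {0..C1} \<times> {0..C2}"
    by (intro convex_hull_eq[THEN iffD2] convex_Times convex_real_interval)
  have sub: "{R. serial_achievable p13 p14 p23 p34 R} \<subseteq> {0..C1} \<times> {0..C2}"
  proof
    fix R assume "R \<in> {R. serial_achievable p13 p14 p23 p34 R}"
    then obtain RA RB where "R = (RA, RB)" "serial_achievable p13 p14 p23 p34 (RA, RB)" by (cases R) auto
    thus "R \<in> {0..C1} \<times> {0..C2}" using achievable_in_rect[OF p] by (auto simp: C1_def C2_def pq)
  qed
  have "closure {R. serial_achievable p13 p14 p23 p34 R} \<subseteq> {0..C1} \<times> {0..C2}"
    by (intro closure_minimal sub closed_Times closed_real_atLeastAtMost)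
  moreover have "{0..C1} \<times> {0..C2} \<subseteq> closure {R. serial_achievable p13 p14 p23 p34 R}"
  proof
    fix z assume z: "z \<in> {0..C1} \<times> {0..C2}"
    obtain x y where xy: "z = (x, y)" "0 \<le> x" "x \<le> C1" "0 \<le> y" "y \<le> C2" using z by auto
    define c where "c k = 1 - inverse (real (Suc k))" for k
    have c01: "0 \<le> c k" "c k < 1" for k by (auto simp: c_def field_simps)
    have cond: "c k * v = 0 \<or> (0 \<le> c k * v \<and> c k * v < C)" if "0 \<le> v" "v \<le> C" for v C k
    proof (cases "v = 0")
      case False
      hence "c k * v < v" using that c01[of k] by (simp add: mult_less_cancel_right2)
      thus ?thesis using that c01[of k] by auto
    qed simp
    have "(\<lambda>k. c k) \<longlonglongrightarrow> 1 - 0"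
      unfolding c_def by (intro tendsto_diff tendsto_const LIMSEQ_inverse_real_of_nat)
    hence cl: "(\<lambda>k. c k) \<longlonglongrightarrow> 1" by simp
    have "(\<lambda>k. (c k * x, c k * y)) \<longlonglongrightarrow> (1 * x, 1 * y)"
      by (intro tendsto_Pair tendsto_mult cl tendsto_const)
    moreover have "serial_achievable p13 p14 p23 p34 (c k * x, c k * y)" for k
      using achievable_both[OF p cond[OF xy(2,3), unfolded C1_def] cond[OF xy(4,5), unfolded C2_def pq]] .
    ultimately show "z \<in> closure {R. serial_achievable p13 p14 p23 p34 R}"
      unfolding closure_sequential xy(1) by (intro exI[of _ "\<lambda>k. (c k * x, c k * y)"]) auto
  qed
  ultimately show ?thesis unfolding serial_region_def rect hull by blast
qed

end
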